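(* For disjoint $I,J\subset\{1,\dots,n\}$, the function $g(I,J)=\bigl(\Psi^{*(-1)}*D_I\Psi\bigr)(J)$ satisfies \[ g(\emptyset,J)=\delta_{\emptyset,J},\qquad g(I,J)=\Bigl(\prod_{i\in I'}(1+\zeta_{i,\iota(I)})\Bigr)\sum_{K\subset J}\Bigl(\prod_{i\in K}\zeta_{i,\iota(I)}\Bigr)g(I'\cup K,J\setminus K)\quad\text{if }I\neq\emptyset, \] where $I'=I\setminus\{\iota(I)\}$. (This system of equations determines $g$ uniquely by induction on $|I|+|J|$.)
   Context: Fix $n\ge1$, real numbers $b_1,\dots,b_n\ge0$ and complex numbers $\zeta_{ij}=\zeta_{ji}$ such that $\prod_{i,j\in I,i<j}|1+\zeta_{ij}|\le\prod_{i\in I}e^{b_i}$ for every $I\subset\{1,\dots,n\}$. Let $\mathcal{A}$ be the set of complex functions on the power set of $\{1,\dots,n\}$, with product $f*g(I)=\sum_{J\subset I}f(J)g(I\setminus J)$; this is a commutative algebra with unit $1_{\mathcal A}(I)=\delta_{I,\emptyset}$, and any $f$ with $f(\emptyset)\neq0$ has a unique $*$-inverse $f^{*(-1)}$. For $I\subset\{1,\dots,n\}$ define $D_If(J)=f(I\cup J)$ if $I\cap J=\emptyset$ and $D_If(J)=0$ otherwise. Let $\Psi(I)=\prod_{i,j\in I,i<j}(1+\zeta_{ij})$ (so $\Psi(\emptyset)=1$). Let $\iota$ be a function assigning to each nonempty $I\subset\{1,\dots,n\}$ an element $\iota(I)\in I$ such that $\prod_{j\in I\setminus\{\iota(I)\}}|1+\zeta_{j,\iota(I)}|\le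 e^{2b_{\iota(I)}}$ (such an element exists by the hypothesis). Empty sums are $0$, empty products are $1$. *)

theory Defs
  imports Complex_Main
begin

text \<open>Functions on the power set of {1..n} are modelled as functions nat set => complex;
  only their values on subsets of {1..n} matter.\<close>

definition setconv :: "(nat set \<Rightarrow> complex) \<Rightarrow> (nat set \<Rightarrow> complex) \<Rightarrow> nat set \<Rightarrow> complex"
  where "setconv f g I = (\<Sum>J\<in>Pow I. f J * g (I - J))"

definition setunit :: "nat set \<Rightarrow> complex"
  where "setunit I = (if I = {} then 1 else 0)"

definition setconv_inv :: "nat \<Rightarrow> (nat set \<Rightarrow> complex) \<Rightarrow> nat set \<Rightarrow> complex"
  where "setconv_inv n f = (THE h. (\<forall>I. I \<subseteq> {1..n} \<longrightarrow> setconv f h I = setunit I)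
                                  \<and> (\<forall>I. \<not> I \<subseteq> {1..n} \<longrightarrow> h I = 0))"

definition setD :: "nat set \<Rightarrow> (nat set \<Rightarrow> complex) \<Rightarrow> nat set \<Rightarrow> complex"
  where "setD I f J = (if I \<inter> J = {} then f (I \<union> J) else 0)"

definition Psi :: "(nat \<Rightarrow> nat \<Rightarrow> complex) \<Rightarrow> nat set \<Rightarrow> complex"
  where "Psi \<zeta> I = (\<Prod>(i, j)\<in>{(i, j). i \<in> I \<and> j \<in> I \<and> i < j}. 1 + \<zeta> i j)"

end

theory Submission
  imports Defs
begin




primrec H :: "nat \<Rightarrow> (nat set \<Rightarrow> complex) \<Rightarrow> nat \<Rightarrow> nat set \<Rightarrow> complex" where
  "H n f 0 I = 0"
| "H n f (Suc k) I = (if I \<subseteq> {1..n} then setunit I - (\<Sum>J\<in>Pow I - {{}}. f J * H n f k (I - J)) else 0)"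

definition invrec :: "nat \<Rightarrow> (nat set \<Rightarrow> complex) \<Rightarrow> nat set \<Rightarrow> complex" where
  "invrec n f I = H n f (Suc (card I)) I"

lemma H_stab:
  assumes "finite I"
  shows "\<forall>k m. card I < k \<longrightarrow> card I < m \<longrightarrow> H n f k I = H n f m I"
  using assms
proof (induction I rule: finite_psubset_induct)
  case (psubset I)
  show ?case
  proof (intro allI impI)
    fix k m assume k: "card I < k" and m: "card I < m"
    obtain k' where k': "k = Suc k'" using k by (cases k) auto
    obtain m' where m': "m = Suc m'" using m by (cases m) auto
    have "(\<Sum>J\<in>Pow I - {{}}. f J * H n f k' (I - J)) = (\<Sum>J\<in>Pow I - {{}}. f J * H n f m' (I - J))"
    proof (rule sum.cong)
      fix J assume J: "J \<in> Pow I - {{}}"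
      then have ps: "I - J \<subset> I" by auto
      then have "card (I - J) < card I" using psubset(1) by (simp add: psubset_card_mono)
      then show "f J * H n f k' (I - J) = f J * H n f m' (I - J)"
      proof -
        have "card (I - J) < k'" "card (I - J) < m'" using \<open>card (I - J) < card I\<close> k m k' m' by auto
        then have "H n f k' (I - J) = H n f m' (I - J)" using psubset(2)[OF ps] by blast
        then show ?thesis by simp
      qed
    qed simp
    then show "H n f k I = H n f m I" using k' m' by simp
  qed
qed

lemma invrec_eq:
  assumes "I \<subseteq> {1..n}"
  shows "invrec n f I = setunit I - (\<Sum>J\<in>Pow I - {{}}. f J * invrec n f (I - J))"
proof -
  have fin: "finite I" using assms finite_subset by blast
  have "(\<Sum>J\<in>Pow I - {{}}. f J * H n f (card I) (I - J)) = (\<Sum>J\<in>Pow I - {{}}. f J * invrec n f (I - J))"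
  proof (rule sum.cong)
    fix J assume J: "J \<in> Pow I - {{}}"
    then have ps: "I - J \<subset> I" by auto
    then have "card (I - J) < card I" using fin by (simp add: psubset_card_mono)
    moreover have "finite (I - J)" using fin by simp
    ultimately show "f J * H n f (card I) (I - J) = f J * invrec n f (I - J)"
      unfolding invrec_def using H_stab[of "I - J" n f] by (metis lessI)
  qed simp
  then show ?thesis using assms unfolding invrec_def by simp
qed

lemma invrec_out: "\<not> I \<subseteq> {1..n} \<Longrightarrow> invrec n f I = 0"
  unfolding invrec_def by simp


lemma setconv_comm: "finite I \<Longrightarrow> setconv f g I = setconv g f I"
  unfolding setconv_def
  by (rule sum.reindex_bij_witness[of _ "\<lambda>J. I - J" "\<lambda>J. I - J"]) (auto simp: double_diff mult.commute)

lemma inv_exists: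
  assumes "f {} = 1" "I \<subseteq> {1..n}"
  shows "setconv f (invrec n f) I = setunit I"
proof -
  have fin: "finite I" using assms(2) finite_subset by blast
  have "Pow I = insert {} (Pow I - {{}})" by auto
  then have "setconv f (invrec n f) I = f {} * invrec n f I + (\<Sum>J\<in>Pow I - {{}}. f J * invrec n f (I - J))"
    unfolding setconv_def using fin by (metis (no_types, lifting) Diff_empty Diff_iff finite_Diff finite_Pow_iff insertI1 sum.insert)
  also have "\<dots> = setunit I"
    using assms invrec_eq[OF assms(2), of f] by simp
  finally show ?thesis .
qed

lemma inv_unique:
  assumes "f {} = 1"
    and h1: "\<forall>I. I \<subseteq> {1..n} \<longrightarrow> setconv f h1 I = setunit I" "\<forall>I. \<not> I \<subseteq> {1..n} \<longrightarrow> h1 I = 0"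
    and h2: "\<forall>I. I \<subseteq> {1..n} \<longrightarrow> setconv f h2 I = setunit I" "\<forall>I. \<not> I \<subseteq> {1..n} \<longrightarrow> h2 I = 0"
  shows "h1 I = h2 I"
proof (cases "I \<subseteq> {1..n}")
  case False then show ?thesis using h1 h2 by simp
next
  case True
  have fin: "finite I" using True finite_subset by blast
  show ?thesis using fin True
  proof (induction I rule: finite_psubset_induct)
    case (psubset I)
    have split: "\<And>h. setconv f h I = h I + (\<Sum>J\<in>Pow I - {{}}. f J * h (I - J))"
    proof -
      fix h
      have "Pow I = insert {} (Pow I - {{}})" by auto
      then show "setconv f h I = h I + (\<Sum>J\<in>Pow I - {{}}. f J * h (I - J))"
        unfolding setconv_def using psubset(1) assms(1)
        by (metis (no_types, lifting) Diff_empty Diff_iff finite_Diff finite_Pow_iff insertI1 sum.insert mult_1)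
    qed
    have "(\<Sum>J\<in>Pow I - {{}}. f J * h1 (I - J)) = (\<Sum>J\<in>Pow I - {{}}. f J * h2 (I - J))"
    proof (rule sum.cong)
      fix J assume J: "J \<in> Pow I - {{}}"
      then have "I - J \<subset> I" by auto
      moreover have "I - J \<subseteq> {1..n}" using psubset(3) by auto
      ultimately show "f J * h1 (I - J) = f J * h2 (I - J)" using psubset(2) by simp
    qed simp
    moreover have "setconv f h1 I = setconv f h2 I" using h1 h2 psubset(3) by simp
    ultimately show ?case using split[of h1] split[of h2] by simp
  qed
qed

lemma setconv_inv_prop:
  assumes "f {} = 1" "I \<subseteq> {1..n}"
  shows "setconv (setconv_inv n f) f I = setunit I"
proof -
  let ?P = "\<lambda>h. (\<forall>I. I \<subseteq> {1..n} \<longrightarrow> setconv f h I = setunit I) \<and> (\<forall>I. \<not> I \<subseteq> {1..n} \<longrightarrow> h I = 0)"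
  have "?P (invrec n f)" using inv_exists[of f, OF assms(1)] invrec_out by blast
  note hP = this
  have "?P (setconv_inv n f)" unfolding setconv_inv_def
  proof (rule theI[where a="invrec n f"])
    show "?P (invrec n f)" by (rule hP)
  next
    fix h assume "?P h"
    show "h = invrec n f"
    proof (rule ext)
      fix I
      show "h I = invrec n f I"
        by (rule inv_unique[of f n h "invrec n f"]) (use assms(1) hP \<open>?P h\<close> in \<open>simp_all\<close>)
    qed
  qed
  then have "setconv f (setconv_inv n f) I = setunit I" using assms(2) by blast
  moreover have "finite I" using finite_subset[OF assms(2)] by simp
  ultimately show ?thesis using setconv_comm[of I f "setconv_inv n f"] by simp
qed



lemma Psi_insert:
  assumes fin: "finite S" and nin: "i0 \<notin> S" and sym: "\<forall>j\<in>S. \<zeta> j i0 = \<zeta> i0 j"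
  shows "Psi \<zeta> (insert i0 S) = Psi \<zeta> S * (\<Prod>j\<in>S. 1 + \<zeta> j i0)"
proof -
  let ?A = "{(i, j). i \<in> S \<and> j \<in> S \<and> i < j}"
  let ?B = "Pair i0 ` {j\<in>S. i0 < j}"
  let ?C = "(\<lambda>j. (j, i0)) ` {j\<in>S. j < i0}"
  have finA: "finite ?A" by (rule finite_subset[of _ "S \<times> S"]) (use fin in auto)
  have eq: "{(i, j). i \<in> insert i0 S \<and> j \<in> insert i0 S \<and> i < j} = ?A \<union> (?B \<union> ?C)" by auto
  have "Psi \<zeta> (insert i0 S) = (\<Prod>(i, j)\<in>?A \<union> (?B \<union> ?C). 1 + \<zeta> i j)"
    unfolding Psi_def eq ..
  also have "\<dots> = (\<Prod>(i, j)\<in>?A. 1 + \<zeta> i j) * (\<Prod>(i, j)\<in>?B \<union> ?C. 1 + \<zeta> i j)"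
    by (rule prod.union_disjoint) (use fin nin finA in auto)
  also have "(\<Prod>(i, j)\<in>?B \<union> ?C. 1 + \<zeta> i j) = (\<Prod>(i, j)\<in>?B. 1 + \<zeta> i j) * (\<Prod>(i, j)\<in>?C. 1 + \<zeta> i j)"
    by (rule prod.union_disjoint) (use fin in auto)
  also have "(\<Prod>(i, j)\<in>?B. 1 + \<zeta> i j) = (\<Prod>j\<in>{j\<in>S. i0 < j}. 1 + \<zeta> j i0)"
    by (subst prod.reindex) (use sym in \<open>auto intro: inj_onI intro!: prod.cong\<close>)
  also have "(\<Prod>(i, j)\<in>?C. 1 + \<zeta> i j) = (\<Prod>j\<in>{j\<in>S. j < i0}. 1 + \<zeta> j i0)"
    by (subst prod.reindex) (auto intro: inj_onI)
  also have "(\<Prod>j\<in>{j\<in>S. i0 < j}. 1 + \<zeta> j i0) * (\<Prod>j\<in>{j\<in>S. j < i0}. 1 + \<zeta> j i0)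
      = (\<Prod>j\<in>{j\<in>S. i0 < j} \<union> {j\<in>S. j < i0}. 1 + \<zeta> j i0)"
    by (rule prod.union_disjoint[symmetric]) (use fin in auto)
  also have "{j\<in>S. i0 < j} \<union> {j\<in>S. j < i0} = S" using nin by auto (metis linorder_neqE_nat)
  finally show ?thesis unfolding Psi_def by simp
qed

lemma prod_one_plus: "finite M \<Longrightarrow> (\<Prod>j\<in>M. 1 + z j) = (\<Sum>K\<in>Pow M. \<Prod>j\<in>K. (z j :: complex))"
  using prod_add[of M z "\<lambda>_. 1"] by (simp add: add.commute)



lemma sum_Pow_diff:
  assumes "finite J"
  shows "(\<Sum>K\<in>Pow (J - L). F K) = (\<Sum>K\<in>Pow J. if L \<inter> K = {} then F K else (0::complex))"
proof -
  have "Pow (J - L) = {K\<in>Pow J. L \<inter> K = {}}" by auto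
  then show ?thesis using sum.inter_filter[of "Pow J" F "\<lambda>K. L \<inter> K = {}"] assms by simp
qed

lemma part2:
  assumes finJ: "finite J" and finI: "finite I" and disj: "I \<inter> J = {}" and i0: "i0 \<in> I"
    and sym: "\<forall>j\<in>I \<union> J. \<zeta> j i0 = \<zeta> i0 j"
  shows "setconv \<Phi> (setD I (Psi \<zeta>)) J = (\<Prod>i\<in>I - {i0}. 1 + \<zeta> i i0) *
     (\<Sum>K\<in>Pow J. (\<Prod>i\<in>K. \<zeta> i i0) * setconv \<Phi> (setD ((I - {i0}) \<union> K) (Psi \<zeta>)) (J - K))"
proof -
  let ?I' = "I - {i0}"
  let ?c = "\<Prod>i\<in>?I'. 1 + \<zeta> i i0"
  let ?z = "\<lambda>K. \<Prod>i\<in>K. \<zeta> i i0"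
  let ?F = "\<lambda>L K. \<Phi> L * Psi \<zeta> (?I' \<union> (J - L)) * ?z K"
  have step2: "Psi \<zeta> (I \<union> (J - L)) = Psi \<zeta> (?I' \<union> (J - L)) * (?c * (\<Sum>K\<in>Pow (J - L). ?z K))" for L
  proof -
    have e: "I \<union> (J - L) = insert i0 (?I' \<union> (J - L))" using i0 by auto
    have "Psi \<zeta> (insert i0 (?I' \<union> (J - L))) = Psi \<zeta> (?I' \<union> (J - L)) * (\<Prod>j\<in>?I' \<union> (J - L). 1 + \<zeta> j i0)"
      by (rule Psi_insert) (use finI finJ sym i0 disj in auto)
    then have "Psi \<zeta> (I \<union> (J - L)) = Psi \<zeta> (?I' \<union> (J - L)) * (\<Prod>j\<in>?I' \<union> (J - L). 1 + \<zeta> j i0)"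
      unfolding e .
    also have "(\<Prod>j\<in>?I' \<union> (J - L). 1 + \<zeta> j i0) = ?c * (\<Prod>j\<in>J - L. 1 + \<zeta> j i0)"
      by (rule prod.union_disjoint) (use finI finJ disj in auto)
    also have "(\<Prod>j\<in>J - L. 1 + \<zeta> j i0) = (\<Sum>K\<in>Pow (J - L). ?z K)"
      by (rule prod_one_plus) (use finJ in auto)
    finally show ?thesis .
  qed
  have "setconv \<Phi> (setD I (Psi \<zeta>)) J = (\<Sum>L\<in>Pow J. \<Phi> L * Psi \<zeta> (I \<union> (J - L)))"
    unfolding setconv_def setD_def using disj by (intro sum.cong) auto
  also have "\<dots> = ?c * (\<Sum>L\<in>Pow J. \<Sum>K\<in>Pow (J - L). ?F L K)"
    by (simp add: step2 sum_distrib_left sum_distrib_right mult_ac)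
  also have "(\<Sum>L\<in>Pow J. \<Sum>K\<in>Pow (J - L). ?F L K) = (\<Sum>L\<in>Pow J. \<Sum>K\<in>Pow J. if L \<inter> K = {} then ?F L K else 0)"
    using finJ by (simp add: sum_Pow_diff)
  also have "\<dots> = (\<Sum>K\<in>Pow J. \<Sum>L\<in>Pow J. if L \<inter> K = {} then ?F L K else 0)"
    by (rule sum.swap)
  also have "\<dots> = (\<Sum>K\<in>Pow J. \<Sum>L\<in>Pow J. if K \<inter> L = {} then ?F L K else 0)"
    by (simp add: Int_commute)
  also have "\<dots> = (\<Sum>K\<in>Pow J. \<Sum>L\<in>Pow (J - K). ?F L K)"
    using finJ by (simp add: sum_Pow_diff)
  also have "\<dots> = (\<Sum>K\<in>Pow J. ?z K * setconv \<Phi> (setD (?I' \<union> K) (Psi \<zeta>)) (J - K))"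
  proof (rule sum.cong)
    fix K assume K: "K \<in> Pow J"
    show "(\<Sum>L\<in>Pow (J - K). ?F L K) = ?z K * setconv \<Phi> (setD (?I' \<union> K) (Psi \<zeta>)) (J - K)"
      unfolding setconv_def setD_def sum_distrib_left
    proof (rule sum.cong)
      fix L assume L: "L \<in> Pow (J - K)"
      have "(?I' \<union> K) \<inter> (J - K - L) = {}" using disj K by auto
      moreover have "?I' \<union> K \<union> (J - K - L) = ?I' \<union> (J - L)" using K L by auto
      ultimately show "?F L K = ?z K * (\<Phi> L * (if (?I' \<union> K) \<inter> (J - K - L) = {} then Psi \<zeta> (?I' \<union> K \<union> (J - K - L)) else 0))"
        by (simp add: mult_ac)
    qed simp
  qed simp
  finally show ?thesis .
qed



theorem mainTheorem5:
  fixes n :: nat and b :: "nat \<Rightarrow> real" and \<zeta> :: "nat \<Rightarrow> nat \<Rightarrow> complex"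
    and \<iota> :: "nat set \<Rightarrow> nat"
  assumes "n \<ge> 1"
    and b_nonneg: "\<forall>i\<in>{1..n}. b i \<ge> 0"
    and \<zeta>_sym: "\<forall>i\<in>{1..n}. \<forall>j\<in>{1..n}. \<zeta> i j = \<zeta> j i"
    and hyp: "\<forall>I. I \<subseteq> {1..n} \<longrightarrow>
      (\<Prod>(i, j)\<in>{(i, j). i \<in> I \<and> j \<in> I \<and> i < j}. cmod (1 + \<zeta> i j)) \<le> (\<Prod>i\<in>I. exp (b i))"
    and \<iota>_mem: "\<forall>I. I \<subseteq> {1..n} \<and> I \<noteq> {} \<longrightarrow> \<iota> I \<in> I"
    and \<iota>_bound: "\<forall>I. I \<subseteq> {1..n} \<and> I \<noteq> {} \<longrightarrow>
      (\<Prod>j\<in>I - {\<iota> I}. cmod (1 + \<zeta> j (\<iota> I))) \<le> exp (2 * b (\<iota> I))"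
  defines "g \<equiv> (\<lambda>I J. setconv (setconv_inv n (Psi \<zeta>)) (setD I (Psi \<zeta>)) J)"
  shows "(\<forall>J. J \<subseteq> {1..n} \<longrightarrow> g {} J = (if J = {} then 1 else 0))
       \<and> (\<forall>I J. I \<subseteq> {1..n} \<and> J \<subseteq> {1..n} \<and> I \<inter> J = {} \<and> I \<noteq> {} \<longrightarrow>
            g I J = (\<Prod>i\<in>I - {\<iota> I}. 1 + \<zeta> i (\<iota> I)) *
              (\<Sum>K\<in>Pow J. (\<Prod>i\<in>K. \<zeta> i (\<iota> I)) * g ((I - {\<iota> I}) \<union> K) (J - K)))"


proof -
  have P0: "Psi \<zeta> {} = 1" unfolding Psi_def by simp
  have D0: "setD {} (Psi \<zeta>) = Psi \<zeta>" by (rule ext) (simp add: setD_def)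
  have A: "\<forall>J. J \<subseteq> {1..n} \<longrightarrow> g {} J = (if J = {} then 1 else 0)"
  proof (intro allI impI)
    fix J :: "nat set" assume "J \<subseteq> {1..n}"
    then have "setconv (setconv_inv n (Psi \<zeta>)) (Psi \<zeta>) J = setunit J"
      by (rule setconv_inv_prop[of "Psi \<zeta>", OF P0])
    then show "g {} J = (if J = {} then 1 else 0)" unfolding g_def D0 setunit_def .
  qed
  have B: "g I J = (\<Prod>i\<in>I - {\<iota> I}. 1 + \<zeta> i (\<iota> I)) *
              (\<Sum>K\<in>Pow J. (\<Prod>i\<in>K. \<zeta> i (\<iota> I)) * g ((I - {\<iota> I}) \<union> K) (J - K))"
    if h: "I \<subseteq> {1..n}" "J \<subseteq> {1..n}" "I \<inter> J = {}" "I \<noteq> {}" for I J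
  proof -
    have mem: "\<iota> I \<in> I" using \<iota>_mem h by blast
    show ?thesis unfolding g_def
    proof (rule part2)
      show "finite J" using h finite_subset by blast
      show "finite I" using h finite_subset by blast
      show "\<forall>j\<in>I \<union> J. \<zeta> j (\<iota> I) = \<zeta> (\<iota> I) j" proof
      fix j assume "j \<in> I \<union> J"
      then have "j \<in> {1..n}" "\<iota> I \<in> {1..n}" using h mem by auto
      then show "\<zeta> j (\<iota> I) = \<zeta> (\<iota> I) j" using \<zeta>_sym by blast
    qed
    qed (use h mem in auto)
  qed
  show ?thesis
  proof (intro conjI)
    show "\<forall>J. J \<subseteq> {1..n} \<longrightarrow> g {} J = (if J = {} then 1 else 0)" by (rule A)
    show "\<forall>I J. I \<subseteq> {1..n} \<and> J \<subseteq> {1..n} \<and> I \<inter> J = {} \<and> I \<noteq> {} \<longrightarrow>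
            g I J = (\<Prod>i\<in>I - {\<iota> I}. 1 + \<zeta> i (\<iota> I)) *
              (\<Sum>K\<in>Pow J. (\<Prod>i\<in>K. \<zeta> i (\<iota> I)) * g ((I - {\<iota> I}) \<union> K) (J - K))"
    proof (intro allI impI)
      fix I J assume "I \<subseteq> {1..n} \<and> J \<subseteq> {1..n} \<and> I \<inter> J = {} \<and> I \<noteq> {}"
      then show "g I J = (\<Prod>i\<in>I - {\<iota> I}. 1 + \<zeta> i (\<iota> I)) *
              (\<Sum>K\<in>Pow J. (\<Prod>i\<in>K. \<zeta> i (\<iota> I)) * g ((I - {\<iota> I}) \<union> K) (J - K))"
        using B by blast
    qed
  qed
qed

end
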